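(* Let $I,J,J'\in\mathcal I$ be such that $J\vartriangleleft I$, $J'\vartriangleleft I$, and $J\neq J'$. Then at least one of the following holds: $J'\vartriangleleft J$; $J\vartriangleleft J'$; or there is $J''\in\mathcal I$ with $J''\vartriangleleft J$ and $J''\vartriangleleft J'$.
   Context: Let $(a_i)_{i=1,\dots,n}$ be a sequence of distinct integers between $1$ and $n$, and set $a_0=0$; write $A=(a_i)_{i=0,1,\dots,n}$. A set $I\subseteq\{0\}\cup[n]$ is feasible if $a_i<a_j$ for all $i,j\in I$ with $i<j$; $\mathcal I$ denotes the family of feasible sets of maximum cardinality. Patience sorting: start with empty piles $P_0,\dots,P_n$; for $i=0,1,\dots,n$ in order, put $a_i$ on top of the pile $P_j$ with smallest index $j$ such that $P_j$ is empty or the top element of $P_j$ is greater than $a_i$. Let $P_0,\dots,P_k$ be the resulting nonempty piles. Say $a_u$ is placed below $a_v$ on a pile if both lie on the same pile and $a_u$ was put there before $a_v$. For $I,J\in\mathcal I$, write $I\vartriangleleft J$ if $I\setminus J=\{u\}$ and $J\setminus I=\{v\}$ for some $u,v$ such that $a_u$ is placed strictly below $a_v$ on pile $P_i$ for some $1\le i\le k$. *)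

theory Defs
  imports Main
begin

text \<open>The sequence is a function a with a 0 = 0 and a 1, ..., a n distinct in {1..n}.
Piles are lists; the head of a pile is its top element. Pile j of the list has index j
(P_0 is the first pile).\<close>

definition feasible :: "(nat \<Rightarrow> nat) \<Rightarrow> nat \<Rightarrow> nat set \<Rightarrow> bool" where
  "feasible a n I \<longleftrightarrow> I \<subseteq> {0..n} \<and> (\<forall>i\<in>I. \<forall>j\<in>I. i < j \<longrightarrow> a i < a j)"

definition maxfeas :: "(nat \<Rightarrow> nat) \<Rightarrow> nat \<Rightarrow> nat set set" where
  "maxfeas a n = {I. feasible a n I \<and> (\<forall>J. feasible a n J \<longrightarrow> card J \<le> card I)}"

fun ins :: "nat \<Rightarrow> nat list list \<Rightarrow> nat list list" where
  "ins x [] = [[x]]"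
| "ins x (p # ps) = (if p = [] \<or> hd p > x then (x # p) # ps else p # ins x ps)"

definition piles :: "(nat \<Rightarrow> nat) \<Rightarrow> nat \<Rightarrow> nat list list" where
  "piles a n = foldl (\<lambda>ps k. ins (a k) ps) [] [0..<Suc n]"

text \<open>a_u is placed strictly below a_v on some pile P_i with 1 <= i <= k: both lie on
that pile and a_u was put there before a_v, i.e. at an earlier step u < v.\<close>
definition placed_below :: "(nat \<Rightarrow> nat) \<Rightarrow> nat \<Rightarrow> nat \<Rightarrow> nat \<Rightarrow> bool" where
  "placed_below a n u v \<longleftrightarrow> u \<le> n \<and> v \<le> n \<and> u < v \<and>
     (\<exists>i. 1 \<le> i \<and> i < length (piles a n) \<and>
          a u \<in> set (piles a n ! i) \<and> a v \<in> set (piles a n ! i))"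

definition tri :: "(nat \<Rightarrow> nat) \<Rightarrow> nat \<Rightarrow> nat set \<Rightarrow> nat set \<Rightarrow> bool" where
  "tri a n I J \<longleftrightarrow> (\<exists>u v. I - J = {u} \<and> J - I = {v} \<and> placed_below a n u v)"

end

theory Submission
  imports Defs
begin

definition F :: "(nat \<Rightarrow> nat) \<Rightarrow> nat \<Rightarrow> nat list list" where
  "F a k = foldl (\<lambda>ps k. ins (a k) ps) [] [0..<k]"

lemma F_Suc: "F a (Suc k) = ins (a k) (F a k)"
  by (simp add: F_def)

lemma piles_F: "piles a n = F a (Suc n)"
  by (simp add: F_def piles_def)

lemma set_concat_ins: "set (concat (ins x ps)) = insert x (set (concat ps))"
  by (induction ps) auto

lemma distinct_concat_ins: "x \<notin> set (concat ps) \<Longrightarrow> distinct (concat ps) \<Longrightarrow> distinct (concat (ins x ps))"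
  by (induction ps) (auto simp: set_concat_ins[simplified])

lemma set_ins: "q \<in> set (ins x ps) \<Longrightarrow>
   q \<in> set ps \<or> (\<exists>p. q = x # p \<and> p \<in> set ps \<and> (p = [] \<or> x < hd p)) \<or> q = [x]"
  by (induction ps) (auto split: if_splits)

lemma inj_new: "inj_on a {0..<Suc k} \<Longrightarrow> a k \<notin> a ` {0..<k}"
proof
  assume i: "inj_on a {0..<Suc k}" and "a k \<in> a ` {0..<k}"
  then obtain x where "x < k" "a k = a x" by auto
  with inj_onD[OF i this(2)] show False by simp
qed

lemma set_insE: "q \<in> set (ins x ps) \<Longrightarrow> (q \<in> set ps \<Longrightarrow> P) \<Longrightarrow>
  (\<And>p. q = x # p \<Longrightarrow> p \<in> set ps \<Longrightarrow> p = [] \<or> x < hd p \<Longrightarrow> P) \<Longrightarrow> (q = [x] \<Longrightarrow> P) \<Longrightarrow> P"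
  using set_ins by blast

lemma set_F: "set (concat (F a k)) = a ` {0..<k}"
  by (induction k) (auto simp: F_Suc set_concat_ins[simplified] less_Suc_eq, simp add: F_def)

lemma distinct_F: "inj_on a {0..<k} \<Longrightarrow> distinct (concat (F a k))"
proof (induction k)
  case 0 thus ?case by (simp add: F_def)
next
  case (Suc k)
  have "inj_on a {0..<k}" using Suc.prems by (auto intro: inj_on_subset)
  moreover have "a k \<notin> set (concat (F a k))" using inj_new[OF Suc.prems] unfolding set_F .
  ultimately show ?case using Suc.IH by (simp add: F_Suc distinct_concat_ins)
qed

lemma distinct_concat_nth:
  "distinct (concat ps) \<Longrightarrow> i < length ps \<Longrightarrow> j < length ps \<Longrightarrow> x \<in> set (ps!i) \<Longrightarrow> x \<in> set (ps!j) \<Longrightarrow> i = j"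
proof (induction ps arbitrary: i j)
  case Nil thus ?case by simp
next
  case (Cons p ps)
  have cross: "x \<in> set p \<Longrightarrow> m < length ps \<Longrightarrow> x \<in> set (ps!m) \<Longrightarrow> False" for m
    using Cons.prems(1) nth_mem[of m ps] by (simp add: disjoint_iff)
  show ?case
  proof (cases i)
    case 0
    then show ?thesis using Cons.prems cross by (cases j) auto
  next
    case (Suc i')
    then show ?thesis using Cons.prems Cons.IH cross by (cases j) auto
  qed
qed

lemma sorted_F: "q \<in> set (F a k) \<Longrightarrow> sorted_wrt (<) q"
proof (induction k arbitrary: q)
  case 0 thus ?case by (simp add: F_def)
next
  case (Suc k)
  show ?case
  proof (rule set_insE[OF Suc.prems[unfolded F_Suc]])
    fix p assume q: "q = a k # p" and p: "p \<in> set (F a k)" and h: "p = [] \<or> a k < hd p"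
    have sp: "sorted_wrt (<) p" using Suc.IH p by blast
    show ?thesis
    proof (cases p)
      case Nil thus ?thesis using q by simp
    next
      case (Cons z zs)
      thus ?thesis using q h sp by auto
    qed
  qed (use Suc.IH in auto)
qed

lemma order_F: "inj_on a {0..<k} \<Longrightarrow> x < y \<Longrightarrow> y < k \<Longrightarrow> q \<in> set (F a k) \<Longrightarrow>
   a x \<in> set q \<Longrightarrow> a y \<in> set q \<Longrightarrow> a y < a x"
proof (induction k arbitrary: q x y)
  case 0 thus ?case by simp
next
  case (Suc k)
  have inj: "inj_on a {0..<k}" using Suc.prems(1) by (auto intro: inj_on_subset)
  have notin: "a k \<notin> set (concat (F a k))"
    using inj_new[OF Suc.prems(1)] unfolding set_F .
  have neq: "z < k \<Longrightarrow> a z \<noteq> a k" for z using inj_onD[OF Suc.prems(1), of z k] by auto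
  show ?case
  proof (rule set_insE[OF Suc.prems(4)[unfolded F_Suc]])
    assume q: "q \<in> set (F a k)"
    have "y \<noteq> k" using q Suc.prems(6) notin by auto
    thus ?thesis using Suc.IH[OF inj Suc.prems(2) _ q Suc.prems(5,6)] Suc.prems(3) by simp
  next
    fix p assume q: "q = a k # p" and p: "p \<in> set (F a k)" and h: "p = [] \<or> a k < hd p"
    have xk: "x < k" using Suc.prems(2,3) by simp
    have ax: "a x \<in> set p" using q Suc.prems(5) neq[OF xk] by simp
    show ?thesis
    proof (cases "y = k")
      case True
      have sp: "sorted_wrt (<) p" using sorted_F p by blast
      obtain z zs where pz: "p = z # zs" using ax by (cases p) auto
      have "z \<le> a x" using ax sp pz by auto
      thus ?thesis using True h pz by simp
    next
      case False
      hence yk: "y < k" using Suc.prems(3) by simp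
      have ay: "a y \<in> set p" using q Suc.prems(6) neq[OF yk] by simp
      show ?thesis using Suc.IH[OF inj Suc.prems(2) yk p ax ay] .
    qed
  next
    assume "q = [a k]"
    thus ?thesis using Suc.prems(5) neq[of x] Suc.prems(2,3) by simp
  qed
qed


lemma pile_unique:
  assumes "inj_on a {0..n}" "i < length (piles a n)" "j < length (piles a n)"
    "w \<in> set (piles a n ! i)" "w \<in> set (piles a n ! j)"
  shows "i = j"
proof -
  have "inj_on a {0..<Suc n}" using assms(1) by (simp add: atLeastLessThanSuc_atLeastAtMost)
  from distinct_concat_nth[OF distinct_F[OF this], of i j w] show ?thesis
    using assms(2-5) unfolding piles_F by simp
qed

lemma pile_order:
  assumes "inj_on a {0..n}" "i < length (piles a n)" "x < y" "y \<le> n"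
    "a x \<in> set (piles a n ! i)" "a y \<in> set (piles a n ! i)"
  shows "a y < a x"
proof -
  have inj: "inj_on a {0..<Suc n}" using assms(1) by (simp add: atLeastLessThanSuc_atLeastAtMost)
  have "piles a n ! i \<in> set (F a (Suc n))" using assms(2) unfolding piles_F by simp
  from order_F[OF inj assms(3) _ this assms(5,6)] assms(4) show ?thesis by simp
qed

lemma feas_fin: "feasible a n I \<Longrightarrow> finite I"
  unfolding feasible_def by (meson finite_atLeastAtMost finite_subset)

lemma diffA: "J - I = {u::nat} \<Longrightarrow> I - J = {v} \<Longrightarrow> u \<in> J \<and> u \<notin> I \<and> v \<in> I \<and> v \<notin> J"
  by (metis Diff_iff insertI1)

lemma diffB: "J - I = {u::nat} \<Longrightarrow> I - J = {v} \<Longrightarrow> J = insert u (I - {v})"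
  unfolding set_eq_iff by (metis Diff_iff insert_iff singletonD)

lemma S1: "u \<notin> I \<Longrightarrow> u' \<notin> I \<Longrightarrow> u \<noteq> u' \<Longrightarrow> insert u (I - {v}) - insert u' (I - {v}) = {u}"
  by auto
lemma S2: "u \<notin> I \<Longrightarrow> u' \<notin> I \<Longrightarrow> u \<noteq> u' \<Longrightarrow> v \<in> I \<Longrightarrow> v' \<in> I \<Longrightarrow> v \<noteq> v' \<Longrightarrow>
   insert u (insert u' (I - {v, v'})) - insert u (I - {v}) = {u'} \<and> insert u (I - {v}) - insert u (insert u' (I - {v, v'})) = {v'}"
  by auto
lemma S3: "u \<notin> I \<Longrightarrow> u' \<notin> I \<Longrightarrow> u \<noteq> u' \<Longrightarrow> v \<in> I \<Longrightarrow> v' \<in> I \<Longrightarrow> v \<noteq> v' \<Longrightarrow>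
   insert u (insert u' (I - {v, v'})) - insert u' (I - {v'}) = {u} \<and> insert u' (I - {v'}) - insert u (insert u' (I - {v, v'})) = {v}"
  by auto
lemma S4: "x \<in> insert u (insert u' (I - {v, v'})) \<Longrightarrow> y \<in> insert u (insert u' (I - {v, v'})) \<Longrightarrow>
  (x \<in> insert u (I - {v}) \<and> y \<in> insert u (I - {v})) \<or> (x \<in> insert u' (I - {v'}) \<and> y \<in> insert u' (I - {v'})) \<or> (x = u \<and> y = u') \<or> (x = u' \<and> y = u)"
  by auto

theorem lemma1:
  fixes a :: "nat \<Rightarrow> nat" and n :: nat and I J J' :: "nat set"
  assumes "a 0 = 0"
    and "inj_on a {1..n}"
    and "a ` {1..n} \<subseteq> {1..n}"
    and "I \<in> maxfeas a n" and "J \<in> maxfeas a n" and "J' \<in> maxfeas a n"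
    and "tri a n J I" and "tri a n J' I" and "J \<noteq> J'"
  shows "tri a n J' J \<or> tri a n J J' \<or>
         (\<exists>J''\<in>maxfeas a n. tri a n J'' J \<and> tri a n J'' J')"
proof -
  have inj: "inj_on a {0..n}"
  proof (rule inj_onI)
    fix x y assume x: "x \<in> {0..n}" and y: "y \<in> {0..n}" and e: "a x = a y"
    have pos: "a z \<noteq> 0" if z: "z \<in> {1..n}" for z
    proof -
      have "a z \<in> {1..n}" using assms(3) z by blast
      thus ?thesis by simp
    qed
    show "x = y"
    proof (cases "x = 0")
      case True
      show ?thesis
      proof (rule ccontr)
        assume "x \<noteq> y"
        hence "y \<in> {1..n}" using True y by simp
        hence "a y \<noteq> 0" by (rule pos)
        thus False using e True assms(1) by simp
      qed
    next
      case False
      hence x1: "x \<in> {1..n}" using x by simp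
      show ?thesis
      proof (cases "y = 0")
        case True
        thus ?thesis using pos[OF x1] e assms(1) by simp
      next
        case False
        hence "y \<in> {1..n}" using y by simp
        thus ?thesis using inj_onD[OF assms(2) e x1] by simp
      qed
    qed
  qed
  have fI: "feasible a n I" and fJ: "feasible a n J" and fJ': "feasible a n J'"
    and mI: "\<And>K. feasible a n K \<Longrightarrow> card K \<le> card I"
    using assms(4-6) unfolding maxfeas_def by auto
  obtain u v where uv: "J - I = {u}" "I - J = {v}" and pb: "placed_below a n u v"
    using assms(7) unfolding tri_def by blast
  obtain u' v' where uv': "J' - I = {u'}" "I - J' = {v'}" and pb': "placed_below a n u' v'"
    using assms(8) unfolding tri_def by blast
  obtain i where i: "1 \<le> i" "i < length (piles a n)" "a u \<in> set (piles a n ! i)" "a v \<in> set (piles a n ! i)"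
    and uvn: "u \<le> n" "v \<le> n" "u < v"
    using pb unfolding placed_below_def by blast
  obtain i' where i': "1 \<le> i'" "i' < length (piles a n)" "a u' \<in> set (piles a n ! i')" "a v' \<in> set (piles a n ! i')"
    and uvn': "u' \<le> n" "v' \<le> n" "u' < v'"
    using pb' unfolding placed_below_def by blast
  have Jeq: "J = insert u (I - {v})" using diffB[OF uv] .
  have J'eq: "J' = insert u' (I - {v'})" using diffB[OF uv'] .
  have uI: "u \<notin> I" "v \<in> I" "u' \<notin> I" "v' \<in> I" using diffA[OF uv] diffA[OF uv'] by simp_all
  have incI: "\<And>x y. x \<in> I \<Longrightarrow> y \<in> I \<Longrightarrow> x < y \<Longrightarrow> a x < a y" using fI unfolding feasible_def by blast
  have incJ: "\<And>x y. x \<in> J \<Longrightarrow> y \<in> J \<Longrightarrow> x < y \<Longrightarrow> a x < a y" using fJ unfolding feasible_def by blast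
  have incJ': "\<And>x y. x \<in> J' \<Longrightarrow> y \<in> J' \<Longrightarrow> x < y \<Longrightarrow> a x < a y" using fJ' unfolding feasible_def by blast
  show ?thesis
  proof (cases "v = v'")
    case True
    have ii: "i = i'" using pile_unique[OF inj i(2) i'(2) i(4)] i'(4) True by simp
    have uu: "u \<noteq> u'"
    proof
      assume "u = u'"
      hence "J = J'" using Jeq J'eq True by simp
      thus False using assms(9) by simp
    qed
    have d1: "J - J' = {u}" "J' - J = {u'}"
      unfolding Jeq J'eq True using S1[OF uI(1) uI(3) uu] S1[OF uI(3) uI(1)] uu by auto
    show ?thesis
    proof (cases "u < u'")
      case True
      have "placed_below a n u u'" unfolding placed_below_def
        using uvn(1) uvn'(1) True i(1,2,3) i'(3) ii by (intro conjI exI[of _ i]) auto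
      hence "tri a n J J'" using d1 unfolding tri_def by blast
      thus ?thesis by simp
    next
      case False
      hence "u' < u" using uu by simp
      hence "placed_below a n u' u" unfolding placed_below_def
        using uvn(1) uvn'(1) i(1,2,3) i'(3) ii by (intro conjI exI[of _ i]) auto
      hence "tri a n J' J" using d1 unfolding tri_def by blast
      thus ?thesis by simp
    qed
  next
    case vv: False
    show ?thesis
    proof (cases "u = u'")
      case True
      have ii: "i = i'" using pile_unique[OF inj i(2) i'(2) i(3)] i'(3) True by simp
      show ?thesis
      proof (cases "v < v'")
        case True
        have "a v < a v'" using incI uI True by blast
        moreover have "a v' < a v" using pile_order[OF inj i(2) True uvn'(2) i(4)] i'(4) ii by simp
        ultimately show ?thesis by simp
      next
        case False
        hence lt: "v' < v" using vv by simp
        have "a v' < a v" using incI uI lt by blast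
        moreover have "a v < a v'" using pile_order[OF inj i(2) lt uvn(2)] i(4) i'(4) ii by simp
        ultimately show ?thesis by simp
      qed
    next
      case uu: False
      define K where "K = insert u (insert u' (I - {v, v'}))"
      have key1: "a u < a u'" if lt: "u < u'"
      proof -
        have "u < v'" using lt uvn' by simp
        moreover have "u \<in> J" "v' \<in> J" using Jeq uI vv by auto
        ultimately have "a u < a v'" using incJ by blast
        moreover have "a v' < a u'" using pile_order[OF inj i'(2) uvn'(3) uvn'(2) i'(3,4)] .
        ultimately show ?thesis by simp
      qed
      have key2: "a u' < a u" if lt: "u' < u"
      proof -
        have "u' < v" using lt uvn by simp
        moreover have "u' \<in> J'" "v \<in> J'" using J'eq uI vv by auto
        ultimately have "a u' < a v" using incJ' by blast
        moreover have "a v < a u" using pile_order[OF inj i(2) uvn(3) uvn(2) i(3,4)] .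
        ultimately show ?thesis by simp
      qed
      have cover: "\<And>x y. x \<in> K \<Longrightarrow> y \<in> K \<Longrightarrow> (x \<in> J \<and> y \<in> J) \<or> (x \<in> J' \<and> y \<in> J') \<or> (x = u \<and> y = u') \<or> (x = u' \<and> y = u)"
        unfolding K_def Jeq J'eq by (rule S4)
      have fK: "feasible a n K"
        unfolding feasible_def
      proof (intro conjI ballI impI)
        show "K \<subseteq> {0..n}" using fI uvn uvn' unfolding K_def feasible_def by auto
      next
        fix x y assume "x \<in> K" "y \<in> K" "x < y"
        then consider "x \<in> J \<and> y \<in> J" | "x \<in> J' \<and> y \<in> J'" | "x = u \<and> y = u'" | "x = u' \<and> y = u"
          using cover by blast
        thus "a x < a y"
        proof cases
          case 1 thus ?thesis using incJ \<open>x < y\<close> by blast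
        next
          case 2 thus ?thesis using incJ' \<open>x < y\<close> by blast
        next
          case 3 thus ?thesis using key1 \<open>x < y\<close> by blast
        next
          case 4 thus ?thesis using key2 \<open>x < y\<close> by blast
        qed
      qed
      have finI: "finite I" using feas_fin[OF fI] .
      have "card K = card I"
      proof -
        have "card (I - {v, v'}) = card I - 2" using finI uI vv by (simp add: card_Diff_subset)
        moreover have "card I \<ge> 2"
        proof -
          have "{v, v'} \<subseteq> I" using uI by blast
          from card_mono[OF finI this] vv show ?thesis by simp
        qed
        moreover have "card K = card (I - {v, v'}) + 2" unfolding K_def using finI uI uu by simp
        ultimately show ?thesis by simp
      qed
      hence KM: "K \<in> maxfeas a n" using fK mI unfolding maxfeas_def by simp
      have "K - J = {u'}" "J - K = {v'}" unfolding K_def Jeq using S2[OF uI(1) uI(3) uu uI(2) uI(4) vv] by simp_all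
      hence t1: "tri a n K J" using pb' unfolding tri_def by blast
      have "K - J' = {u}" "J' - K = {v}" unfolding K_def J'eq using S3[OF uI(1) uI(3) uu uI(2) uI(4) vv] by simp_all
      hence t2: "tri a n K J'" using pb unfolding tri_def by blast
      show ?thesis using KM t1 t2 by blast
    qed
  qed
qed

end
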